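(* Let $n=2m+1\ge3$, $I\subset\{0,\dots,m\}$ nonempty, $d\in\mathbb Z$, and let $(v_i)_{i\in n\mathbb Z\pm I}$ be a $d$-face of type $I$ with $\mu_i=v_i-\omega_i$. Let $i\in I$ and $\mu\in\{\mu_i,\mu_{-i}\}$, and suppose that $\mu(j)+\mu(j^* )=d$ holds for all $j\in A_i$, or for all $j\in B_i$. Then $\mu$ is self-dual, i.e. $\mu+\mu^*=\mathbf d$ (equivalently $\mu_i=\mu_{-i}$).
   Context: For $v\in\mathbb Z^n$ write $v(j)$ for its $j$-th entry, $\Sigma v$ for the sum of its entries, $v^*$ for the vector with $v^*(j)=v(n+1-j)$, $\mathbf d=(d,\dots,d)$, and $v\ge w$ if $v(j)\ge w(j)$ for all $j$; $j^*=n+1-j$, $A_i=\{1,\dots,i\}\cup\{i^*,\dots,n\}$, $B_i=\{i+1,\dots,n-i\}$. The index set $n\mathbb Z\pm I$ is the set of integers congruent mod $n$ to an element of $I\cup(-I)$. A $d$-face of type $I$ is a family $(v_i)_{i\in n\mathbb Z\pm I}$ of vectors in $\mathbb Z^n$ with: (F1) $v_{i+n}=v_i-\mathbf 1$; (F2) $v_i\ge v_j$ whenever $i\le j$; (F3) $\Sigma v_i-\Sigma v_j=j-i$; (F4) $v_i+v_{-i}^*=\mathbf d$, for all indices $i,j$. For $i=nb+c$ with $b\in\mathbb Z$, $0\le c<n$, $\omega_i=((-1)^{(c)},0^{(n-c)})-\mathbf b$, where $(x^{(p)},y^{(q)})$ denotes $x$ repeated $p$ times followed by $y$ repeated $q$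 times. *)

theory Defs
  imports Main
begin

text \<open>Vectors in Z^n are modelled as functions nat => int; only the entries
  1..n are meaningful. Families (v_i) are functions int => (nat => int).\<close>

definition vge :: "nat \<Rightarrow> (nat \<Rightarrow> int) \<Rightarrow> (nat \<Rightarrow> int) \<Rightarrow> bool" where
  "vge n v w \<longleftrightarrow> (\<forall>j\<in>{1..n}. v j \<ge> w j)"

definition vsum :: "nat \<Rightarrow> (nat \<Rightarrow> int) \<Rightarrow> int" where
  "vsum n v = (\<Sum>j=1..n. v j)"

definition vstar :: "nat \<Rightarrow> (nat \<Rightarrow> int) \<Rightarrow> (nat \<Rightarrow> int)" where
  "vstar n v = (\<lambda>j. v (n + 1 - j))"

definition idxset :: "nat \<Rightarrow> nat set \<Rightarrow> int set" where
  "idxset n I = {i. \<exists>k\<in>I. i mod int n = int k mod int n \<or> i mod int n = (- int k) mod int n}"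

definition dface :: "nat \<Rightarrow> nat set \<Rightarrow> int \<Rightarrow> (int \<Rightarrow> nat \<Rightarrow> int) \<Rightarrow> bool" where
  "dface n I d V \<longleftrightarrow>
     (\<forall>i\<in>idxset n I. \<forall>j\<in>{1..n}. V (i + int n) j = V i j - 1) \<and>
     (\<forall>i\<in>idxset n I. \<forall>k\<in>idxset n I. i \<le> k \<longrightarrow> vge n (V i) (V k)) \<and>
     (\<forall>i\<in>idxset n I. \<forall>k\<in>idxset n I. vsum n (V i) - vsum n (V k) = k - i) \<and>
     (\<forall>i\<in>idxset n I. \<forall>j\<in>{1..n}. V i j + vstar n (V (- i)) j = d)"

definition omega :: "nat \<Rightarrow> int \<Rightarrow> nat \<Rightarrow> int" where
  "omega n i = (\<lambda>j. (if int j \<le> i mod int n then -1 else 0) - i div int n)"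

definition mu :: "nat \<Rightarrow> (int \<Rightarrow> nat \<Rightarrow> int) \<Rightarrow> int \<Rightarrow> nat \<Rightarrow> int" where
  "mu n V i = (\<lambda>j. V i j - omega n i j)"

definition Aset :: "nat \<Rightarrow> nat \<Rightarrow> nat set" where
  "Aset n i = {1..i} \<union> {n + 1 - i..n}"

definition Bset :: "nat \<Rightarrow> nat \<Rightarrow> nat set" where
  "Bset n i = {i + 1..n - i}"

end

theory Submission imports Defs begin
lemma count:
  fixes D :: "nat \<Rightarrow> int"
  assumes "finite S" "A \<subseteq> S" "\<forall>j\<in>S. 0 \<le> D j \<and> D j \<le> 1" "sum D S = int (card A)"
    "(\<forall>j\<in>A. D j = 1) \<or> (\<forall>j\<in>S - A. D j = 0)"
  shows "\<forall>j\<in>S. D j = (if j \<in> A then 1 else 0)"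
proof -
  have fA: "finite A" using assms(1,2) finite_subset by blast
  have split: "sum D S = sum D A + sum D (S - A)"
    by (metis assms(1,2) sum.subset_diff add.commute)
  from assms(5) show ?thesis
  proof
    assume h: "\<forall>j\<in>A. D j = 1"
    then have "sum D A = int (card A)" by simp
    then have "sum D (S - A) = 0" using split assms(4) by simp
    then have "\<forall>j\<in>S - A. D j = 0"
      using sum_nonneg_eq_0_iff[of "S - A" D] assms(1,3) by auto
    then show ?thesis using h by auto
  next
    assume h: "\<forall>j\<in>S - A. D j = 0"
    then have "sum D A = int (card A)" using split assms(4) by simp
    then have "(\<Sum>j\<in>A. 1 - D j) = 0" by (simp add: sum_subtractf)
    then have "\<forall>j\<in>A. 1 - D j = 0"
      using sum_nonneg_eq_0_iff[of A "\<lambda>j. 1 - D j"] fA assms(2,3) by auto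
    then show ?thesis using h by auto
  qed
qed

lemma ommod: assumes "1 \<le> i" "i < n" shows "(- int i) mod int n = int n - int i" "(- int i) div int n = -1"
  using assms by (auto simp: zmod_zminus1_eq_if zdiv_zminus1_eq_if)

theorem lemma5p3p6:
  fixes n m :: nat and I :: "nat set" and d :: int and V :: "int \<Rightarrow> nat \<Rightarrow> int"
    and i :: nat and s :: int
  assumes "n = 2 * m + 1" and "n \<ge> 3"
    and "I \<subseteq> {0..m}" and "I \<noteq> {}"
    and "dface n I d V"
    and "i \<in> I" and "s \<in> {int i, - int i}"
    and "(\<forall>j\<in>Aset n i. mu n V s j + mu n V s (n + 1 - j) = d)
       \<or> (\<forall>j\<in>Bset n i. mu n V s j + mu n V s (n + 1 - j) = d)"
  shows "\<forall>j\<in>{1..n}. mu n V s j + vstar n (mu n V s) j = d"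
proof -
  have im: "i \<le> m" using assms(3,6) by auto
  have F1: "\<forall>i\<in>idxset n I. \<forall>j\<in>{1..n}. V (i + int n) j = V i j - 1"
   and F2: "\<forall>i\<in>idxset n I. \<forall>k\<in>idxset n I. i \<le> k \<longrightarrow> vge n (V i) (V k)"
   and F3: "\<forall>i\<in>idxset n I. \<forall>k\<in>idxset n I. vsum n (V i) - vsum n (V k) = k - i"
   and F4: "\<forall>i\<in>idxset n I. \<forall>j\<in>{1..n}. V i j + vstar n (V (- i)) j = d"
    using assms(5) unfolding dface_def by blast+
  have ip: "int i \<in> idxset n I" using assms(6) unfolding idxset_def by blast
  have im': "- int i \<in> idxset n I" using assms(6) unfolding idxset_def by blast
  have inm: "- int i + int n \<in> idxset n I" using assms(6) unfolding idxset_def by force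
  show ?thesis
  proof (cases "i = 0")
    case True
    then have s0: "s = 0" using assms(7) by auto
    have "\<forall>j\<in>{1..n}. omega n 0 j = 0" unfolding omega_def by auto
    moreover have "\<forall>j\<in>{1..n}. n + 1 - j \<in> {1..n}" by auto
    ultimately show ?thesis using F4 ip True s0 unfolding mu_def vstar_def by auto
  next
    case False
    have i1: "1 \<le> i" and inn: "i < n" using False im assms(1) by auto
    have om1: "\<And>j. omega n (int i) j = (if int j \<le> int i then -1 else 0)"
      unfolding omega_def using inn by simp
    have om2: "\<And>j. omega n (- int i) j = (if int j \<le> int n - int i then 0 else 1)"
      unfolding omega_def using ommod[OF i1 inn] by simp
    define D where "D j = V (- int i) j - V (int i) j" for j
    define A where "A = Aset n i"
    have sym: "\<And>j. j \<in> {1..n} \<Longrightarrow> n + 1 - j \<in> {1..n}" by auto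
    have D01: "\<forall>j\<in>{1..n}. 0 \<le> D j \<and> D j \<le> 1"
    proof
      fix j assume j: "j \<in> {1..n}"
      have "vge n (V (- int i)) (V (int i))" using F2 ip im' by auto
      then have a: "V (- int i) j \<ge> V (int i) j" using j unfolding vge_def by auto
      have "int i \<le> - int i + int n" using inn im assms(1) by simp
      then have "vge n (V (int i)) (V (- int i + int n))" using F2 ip inm by auto
      then have "V (int i) j \<ge> V (- int i) j - 1" using j F1 im' unfolding vge_def by auto
      then show "0 \<le> D j \<and> D j \<le> 1" using a unfolding D_def by auto
    qed
    have Dsum: "sum D {1..n} = 2 * int i"
    proof -
      have "vsum n (V (- int i)) - vsum n (V (int i)) = 2 * int i" using F3 ip im' by auto
      then show ?thesis unfolding vsum_def D_def by (simp add: sum_subtractf)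
    qed
    have AS: "A \<subseteq> {1..n}" unfolding A_def Aset_def using inn i1 by auto
    have cardA: "card A = 2 * i"
    proof -
      have "A = {1..i} \<union> {n + 1 - i..n}" unfolding A_def Aset_def by simp
      moreover have "{1..i} \<inter> {n + 1 - i..n} = {}" using im assms(1) by auto
      ultimately have "card A = card {1..i} + card {n + 1 - i..n}"
        by (simp add: card_Un_disjoint)
      then show ?thesis using inn by simp
    qed
    have BA: "Bset n i = {1..n} - A" unfolding A_def Aset_def Bset_def using im assms(1) by auto
    have keyi: "\<And>j. j \<in> {1..n} \<Longrightarrow> mu n V (int i) j + mu n V (int i) (n + 1 - j)
                 = d - D j + (if j \<in> A then 1 else 0)"
    proof -
      fix j assume j: "j \<in> {1..n}"
      have "V (- int i) j + V (int i) (n + 1 - j) = d"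
        using F4 im' j unfolding vstar_def by force
      then have e: "V (int i) (n + 1 - j) = d - V (- int i) j" using j by auto
      show "mu n V (int i) j + mu n V (int i) (n + 1 - j) = d - D j + (if j \<in> A then 1 else 0)"
        unfolding mu_def om1 D_def e A_def Aset_def using j im assms(1) by auto
    qed
    have keym: "\<And>j. j \<in> {1..n} \<Longrightarrow> mu n V (- int i) j + mu n V (- int i) (n + 1 - j)
                 = 2 * d - (mu n V (int i) j + mu n V (int i) (n + 1 - j))"
    proof -
      fix j assume j: "j \<in> {1..n}"
      have e1: "V (- int i) (n + 1 - j) = d - V (int i) j"
        using F4 ip j unfolding vstar_def by force
      have "V (int i) (n + 1 - j) + V (- int i) (n + 1 - (n + 1 - j)) = d"
        using F4 ip sym[OF j] unfolding vstar_def by force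
      then have e2: "V (- int i) j = d - V (int i) (n + 1 - j)" using j by auto
      show "mu n V (- int i) j + mu n V (- int i) (n + 1 - j)
                 = 2 * d - (mu n V (int i) j + mu n V (int i) (n + 1 - j))"
        unfolding mu_def om1 om2 e1 e2 using j im assms(1) by auto
    qed
    have sumi: "\<And>j. j \<in> {1..n} \<Longrightarrow> (mu n V s j + mu n V s (n + 1 - j) = d) = (D j = (if j \<in> A then 1 else 0))"
    proof -
      fix j assume j: "j \<in> {1..n}"
      show "(mu n V s j + mu n V s (n + 1 - j) = d) = (D j = (if j \<in> A then 1 else 0))"
        using assms(7) keyi[OF j] keym[OF j] by auto
    qed
    have hyp: "(\<forall>j\<in>A. D j = 1) \<or> (\<forall>j\<in>{1..n} - A. D j = 0)"
      using assms(8) sumi AS BA unfolding A_def[symmetric] by (metis (no_types, lifting) Diff_iff subsetD)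
    have "\<forall>j\<in>{1..n}. D j = (if j \<in> A then 1 else 0)"
      by (rule count[OF _ AS D01]) (use Dsum cardA hyp in auto)
    then show ?thesis using sumi unfolding vstar_def by auto
  qed
qed

end
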